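(* Let $T>0$, $g:[0,T]\to(0,\infty)$ continuous, $x_T\in\mathbb{R}^d$. For continuous $f,h:[0,T]\to\mathbb{R}$, $\mathbf{m}\in\mathbb{R}^d$ and $\gamma\in(0,\infty)$, let $$\mathbf{u}^*_{t,\gamma}(\mathbf{x})=g_te^{\bar f_{t:T}}\frac{x_T-e^{\bar f_{t:T}}\mathbf{x}-\mathbf{m}e^{\bar f_T}\bar h_{t:T}}{\gamma^{-1}+e^{2\bar f_T}\bar g^2_{t:T}}$$ and call the "UniDB forward SDE with hyper-parameters $(f,h,\mathbf{m},\gamma\to\infty)$" the SDE $d\mathbf{x}_t=(f_t\mathbf{x}_t+h_t\mathbf{m}+g_t\lim_{\gamma\to\infty}\mathbf{u}^*_{t,\gamma}(\mathbf{x}_t))dt+g_td\mathbf{w}_t$. Then: (i) (DDBMs (VE)) With $f_t=0$, $h_t=0$, this SDE equals $d\mathbf{x}_t=g_t^2\frac{x_T-\mathbf{x}_t}{\sigma_T^2-\sigma_t^2}dt+g_td\mathbf{w}_t$, where $\sigma_t^2$ satisfies $\frac{d}{dt}\sigma_t^2=g_t^2$. (ii) (DDBMs (VP)) With $f_t=-\frac12g_t^2$, $h_t=0$, this SDE equals $d\mathbf{x}_t=\Big(-\frac12g_t^2\mathbf{x}_t+g_t^2\frac{\frac{\alpha_t}{\alpha_T}x_T-\mathbf{x}_t}{\sigma_t^2(\mathrm{SNR}_t/\mathrm{SNR}_T-1)}\Big)dt+g_td\mathbf{w}_t$, where $\alpha_t=e^{-\frac12\int_0^tg_z^2dz}$,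 $\sigma_t^2=1-\alpha_t^2$ and $\mathrm{SNR}_t=\alpha_t^2/\sigma_t^2$. (iii) (GOUB) With $f_t=-\theta_t$, $h_t=\theta_t$, $\mathbf{m}=x_T$, where $\theta:[0,T]\to(0,\infty)$ is continuous and $g_t^2=2\lambda^2\theta_t$ for a constant $\lambda>0$, this SDE equals $d\mathbf{x}_t=\Big(\theta_t+g_t^2\frac{e^{-2\bar\theta_{t:T}}}{\bar\sigma^2_{t:T}}\Big)(x_T-\mathbf{x}_t)dt+g_td\mathbf{w}_t$, where $\bar\theta_{s:t}=\int_s^t\theta_zdz$ and $\bar\sigma^2_{s:t}=\lambda^2(1-e^{-2\bar\theta_{s:t}})$.
   Context: Notation: $\bar f_{s:t}=\int_s^tf_zdz$, $\bar f_t=\bar f_{0:t}$, $\bar h_{s:t}=\int_s^te^{-\bar f_z}h_zdz$, $\bar g^2_{s:t}=\int_s^te^{-2\bar f_z}g_z^2dz$; $\mathbf{w}_t$ is a standard Brownian motion; all identities are for $t\in[0,T)$. $\mathbf{u}^*_{t,\gamma}$ is the optimal feedback controller for minimizing $\int_0^T\frac12\|\mathbf{u}\|^2dt+\frac\gamma2\|\mathbf{x}^u_T-x_T\|^2$ under $d\mathbf{x}_t=(f_t\mathbf{x}_t+h_t\mathbf{m}+g_t\mathbf{u}_t)dt$. The three target SDEs are the forward processes of the DDBM (VE), DDBM (VP) and GOUB diffusion bridge models (obtained by Doob's $h$-transform). *)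

theory Defs
  imports "HOL-Analysis.Analysis"
begin

definition fbar :: "(real \<Rightarrow> real) \<Rightarrow> real \<Rightarrow> real \<Rightarrow> real" where
  "fbar f s t = integral {s..t} f"

definition hbar :: "(real \<Rightarrow> real) \<Rightarrow> (real \<Rightarrow> real) \<Rightarrow> real \<Rightarrow> real \<Rightarrow> real" where
  "hbar f h s t = integral {s..t} (\<lambda>z. exp (- fbar f 0 z) * h z)"

definition gbar2 :: "(real \<Rightarrow> real) \<Rightarrow> (real \<Rightarrow> real) \<Rightarrow> real \<Rightarrow> real \<Rightarrow> real" where
  "gbar2 f g s t = integral {s..t} (\<lambda>z. exp (- 2 * fbar f 0 z) * (g z)\<^sup>2)"

definition ustar :: "(real \<Rightarrow> real) \<Rightarrow> (real \<Rightarrow> real) \<Rightarrow> (real \<Rightarrow> real) \<Rightarrow> real \<Rightarrow>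
    'a::real_vector \<Rightarrow> 'a \<Rightarrow> real \<Rightarrow> real \<Rightarrow> 'a \<Rightarrow> 'a" where
  "ustar f h g T xT m \<gamma> t x =
     ((g t * exp (fbar f t T)) / (1 / \<gamma> + exp (2 * fbar f 0 T) * gbar2 f g t T)) *\<^sub>R
       (xT - exp (fbar f t T) *\<^sub>R x - (exp (fbar f 0 T) * hbar f h t T) *\<^sub>R m)"

text \<open>Drift of the UniDB forward SDE for finite gamma: f_t x + h_t m + g_t u^*_{t,gamma}(x).
  (The diffusion coefficient is g_t in all SDEs considered.)\<close>
definition unidb_drift :: "(real \<Rightarrow> real) \<Rightarrow> (real \<Rightarrow> real) \<Rightarrow> (real \<Rightarrow> real) \<Rightarrow> real \<Rightarrow>
    'a::real_vector \<Rightarrow> 'a \<Rightarrow> real \<Rightarrow> real \<Rightarrow> 'a \<Rightarrow> 'a" where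
  "unidb_drift f h g T xT m \<gamma> t x = f t *\<^sub>R x + h t *\<^sub>R m + g t *\<^sub>R ustar f h g T xT m \<gamma> t x"

definition vp_alpha :: "(real \<Rightarrow> real) \<Rightarrow> real \<Rightarrow> real" where
  "vp_alpha g t = exp (- (1/2) * integral {0..t} (\<lambda>z. (g z)\<^sup>2))"

definition vp_sigma2 :: "(real \<Rightarrow> real) \<Rightarrow> real \<Rightarrow> real" where
  "vp_sigma2 g t = 1 - (vp_alpha g t)\<^sup>2"

definition vp_snr :: "(real \<Rightarrow> real) \<Rightarrow> real \<Rightarrow> real" where
  "vp_snr g t = (vp_alpha g t)\<^sup>2 / vp_sigma2 g t"

definition thetabar :: "(real \<Rightarrow> real) \<Rightarrow> real \<Rightarrow> real \<Rightarrow> real" where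
  "thetabar \<theta> s t = integral {s..t} \<theta>"

definition goub_sigmabar2 :: "real \<Rightarrow> (real \<Rightarrow> real) \<Rightarrow> real \<Rightarrow> real \<Rightarrow> real" where
  "goub_sigmabar2 lam \<theta> s t = lam\<^sup>2 * (1 - exp (- 2 * thetabar \<theta> s t))"

end

theory Submission
  imports Defs "HOL-Analysis.Analysis"
begin


lemma ftc_real:
  fixes F F' :: "real \<Rightarrow> real"
  assumes "a \<le> b" "\<And>x. x\<in>{a..b} \<Longrightarrow> (F has_real_derivative F' x) (at x within {a..b})"
  shows "integral {a..b} F' = F b - F a"
  using fundamental_theorem_of_calculus[OF assms(1), of F F'] assms(2)
  by (simp add: has_real_derivative_iff_has_vector_derivative integral_unique)

lemma prim_deriv:
  fixes f :: "real \<Rightarrow> real"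
  assumes "continuous_on {0..T} f" "0 \<le> a" "b \<le> T" "x \<in> {a..b}"
  shows "((\<lambda>u. integral {0..u} f) has_real_derivative f x) (at x within {a..b})"
proof -
  have "((\<lambda>u. integral {0..u} f) has_vector_derivative f x) (at x within {0..T})"
    using assms by (intro integral_has_vector_derivative) auto
  then have "((\<lambda>u. integral {0..u} f) has_real_derivative f x) (at x within {0..T})"
    by (simp add: has_real_derivative_iff_has_vector_derivative)
  then show ?thesis
    by (rule has_field_derivative_subset) (use assms in auto)
qed

lemma int_pos:
  fixes f :: "real \<Rightarrow> real"
  assumes "continuous_on {a..b} f" "\<forall>x\<in>{a..b}. f x > 0" "a < b"
  shows "integral {a..b} f > 0"
proof -
  obtain x0 where x0: "x0 \<in> {a..b}" "\<forall>y\<in>{a..b}. f x0 \<le> f y"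
    using continuous_attains_inf[of "{a..b}" f] assms by auto
  have "integral {a..b} (\<lambda>_. f x0) \<le> integral {a..b} f"
    using x0 assms by (intro integral_le integrable_continuous_real) auto
  moreover have "integral {a..b} (\<lambda>_. f x0) = f x0 * (b - a)"
    using assms by simp
  moreover have "f x0 * (b - a) > 0" using x0 assms by auto
  ultimately show ?thesis by linarith
qed

lemma unidb_lim:
  fixes xT m x :: "'a::real_normed_vector"
  assumes "exp (2 * fbar f 0 T) * gbar2 f g t T \<noteq> 0"
  shows "((\<lambda>\<gamma>. unidb_drift f h g T xT m \<gamma> t x) \<longlongrightarrow>
     f t *\<^sub>R x + h t *\<^sub>R m + g t *\<^sub>R (((g t * exp (fbar f t T)) / (exp (2 * fbar f 0 T) * gbar2 f g t T)) *\<^sub>R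
       (xT - exp (fbar f t T) *\<^sub>R x - (exp (fbar f 0 T) * hbar f h t T) *\<^sub>R m))) at_top"
proof -
  have i: "((\<lambda>\<gamma>::real. 1 / \<gamma>) \<longlongrightarrow> 0) at_top"
    using tendsto_inverse_0_at_top[OF filterlim_ident] by (simp add: inverse_eq_divide)
  have "((\<lambda>\<gamma>::real. 1 / \<gamma> + exp (2 * fbar f 0 T) * gbar2 f g t T) \<longlongrightarrow> 0 + exp (2 * fbar f 0 T) * gbar2 f g t T) at_top"
    by (intro tendsto_intros i)
  then show ?thesis unfolding unidb_drift_def ustar_def
    using assms by (auto intro!: tendsto_intros)
qed

theorem proposition4p4:
  fixes T :: real and g :: "real \<Rightarrow> real" and xT :: "'a::euclidean_space"
  assumes T_pos: "T > 0"
    and g_cont: "continuous_on {0..T} g"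
    and g_pos: "\<forall>t\<in>{0..T}. g t > 0"
  shows
    \<comment> \<open>(i) DDBM (VE): f = 0, h = 0\<close>
    "(\<forall>s2 :: real \<Rightarrow> real. \<forall>m :: 'a.
        (\<forall>t\<in>{0..T}. (s2 has_real_derivative (g t)\<^sup>2) (at t within {0..T})) \<longrightarrow>
        (\<forall>t\<in>{0..<T}. \<forall>x :: 'a.
           ((\<lambda>\<gamma>. unidb_drift (\<lambda>_. 0) (\<lambda>_. 0) g T xT m \<gamma> t x)
              \<longlongrightarrow> ((g t)\<^sup>2 / (s2 T - s2 t)) *\<^sub>R (xT - x)) at_top))
     \<and>
    \<comment> \<open>(ii) DDBM (VP): f = -g^2/2, h = 0\<close>
     (\<forall>m :: 'a. \<forall>t\<in>{0<..<T}. \<forall>x :: 'a.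
        ((\<lambda>\<gamma>. unidb_drift (\<lambda>z. - (1/2) * (g z)\<^sup>2) (\<lambda>_. 0) g T xT m \<gamma> t x)
           \<longlongrightarrow> (- (1/2) * (g t)\<^sup>2) *\<^sub>R x
               + ((g t)\<^sup>2 / (vp_sigma2 g t * (vp_snr g t / vp_snr g T - 1))) *\<^sub>R
                   ((vp_alpha g t / vp_alpha g T) *\<^sub>R xT - x)) at_top)
     \<and>
    \<comment> \<open>(iii) GOUB: f = -theta, h = theta, m = xT, g^2 = 2 lam^2 theta\<close>
     (\<forall>(\<theta> :: real \<Rightarrow> real) (lam :: real).
        continuous_on {0..T} \<theta> \<and> (\<forall>t\<in>{0..T}. \<theta> t > 0) \<and> lam > 0 \<and>
        (\<forall>t\<in>{0..T}. (g t)\<^sup>2 = 2 * lam\<^sup>2 * \<theta> t) \<longrightarrow>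
        (\<forall>t\<in>{0..<T}. \<forall>x :: 'a.
           ((\<lambda>\<gamma>. unidb_drift (\<lambda>z. - \<theta> z) \<theta> g T xT xT \<gamma> t x)
              \<longlongrightarrow> (\<theta> t + (g t)\<^sup>2 * exp (- 2 * thetabar \<theta> t T) / goub_sigmabar2 lam \<theta> t T)
                    *\<^sub>R (xT - x)) at_top))"
proof (intro conjI)
  have gc2: "continuous_on {0..T} (\<lambda>z. (g z)\<^sup>2)" using g_cont by (intro continuous_intros)
  have gp2: "\<forall>z\<in>{a..b}. (g z)\<^sup>2 > 0" if "0 \<le> a" "b \<le> T" for a b
  proof
    fix z assume "z \<in> {a..b}"
    then have "g z > 0" using g_pos that by auto
    then show "(g z)\<^sup>2 > 0" by simp
  qed
  show "\<forall>s2 :: real \<Rightarrow> real. \<forall>m :: 'a.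
        (\<forall>t\<in>{0..T}. (s2 has_real_derivative (g t)\<^sup>2) (at t within {0..T})) \<longrightarrow>
        (\<forall>t\<in>{0..<T}. \<forall>x :: 'a.
           ((\<lambda>\<gamma>. unidb_drift (\<lambda>_. 0) (\<lambda>_. 0) g T xT m \<gamma> t x)
              \<longlongrightarrow> ((g t)\<^sup>2 / (s2 T - s2 t)) *\<^sub>R (xT - x)) at_top)"
  proof (intro allI impI ballI)
    fix s2 :: "real \<Rightarrow> real" and m x :: 'a and t
    assume ds: "\<forall>t\<in>{0..T}. (s2 has_real_derivative (g t)\<^sup>2) (at t within {0..T})"
      and t: "t \<in> {0..<T}"
    have fb: "fbar (\<lambda>_. 0) a b = 0" for a b by (simp add: fbar_def)
    have hb: "hbar (\<lambda>_. 0) (\<lambda>_. 0) a b = 0" for a b by (simp add: hbar_def)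
    have "gbar2 (\<lambda>_. 0) g t T = integral {t..T} (\<lambda>z. (g z)\<^sup>2)"
      by (simp add: gbar2_def fb)
    also have "\<dots> = s2 T - s2 t"
      proof (rule ftc_real)
      fix z assume z: "z \<in> {t..T}"
      then have "(s2 has_real_derivative (g z)\<^sup>2) (at z within {0..T})" using ds t by auto
      then show "(s2 has_real_derivative (g z)\<^sup>2) (at z within {t..T})"
        by (rule has_field_derivative_subset) (use t in auto)
    qed (use t in auto)
    finally have gb: "gbar2 (\<lambda>_. 0) g t T = s2 T - s2 t" .
    have "integral {t..T} (\<lambda>z. (g z)\<^sup>2) > 0"
      using t gp2[of t T] by (intro int_pos continuous_on_subset[OF gc2]) auto
    then have pos: "s2 T - s2 t > 0"
      using gb \<open>gbar2 (\<lambda>_. 0) g t T = integral {t..T} (\<lambda>z. (g z)\<^sup>2)\<close> by simp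
    have L: "((\<lambda>\<gamma>. unidb_drift (\<lambda>_. 0) (\<lambda>_. 0) g T xT m \<gamma> t x) \<longlongrightarrow>
       (0::real) *\<^sub>R x + (0::real) *\<^sub>R m + g t *\<^sub>R (((g t * exp (fbar (\<lambda>_. 0) t T)) / (exp (2 * fbar (\<lambda>_. 0) 0 T) * gbar2 (\<lambda>_. 0) g t T)) *\<^sub>R
       (xT - exp (fbar (\<lambda>_. 0) t T) *\<^sub>R x - (exp (fbar (\<lambda>_. 0) 0 T) * hbar (\<lambda>_. 0) (\<lambda>_. 0) t T) *\<^sub>R m))) at_top"
      using unidb_lim[of "\<lambda>_. 0" T g t "\<lambda>_. 0" xT m x] pos gb by simp
    have "(0::real) *\<^sub>R x + (0::real) *\<^sub>R m + g t *\<^sub>R (((g t * exp (fbar (\<lambda>_. 0) t T)) / (exp (2 * fbar (\<lambda>_. 0) 0 T) * gbar2 (\<lambda>_. 0) g t T)) *\<^sub>R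
       (xT - exp (fbar (\<lambda>_. 0) t T) *\<^sub>R x - (exp (fbar (\<lambda>_. 0) 0 T) * hbar (\<lambda>_. 0) (\<lambda>_. 0) t T) *\<^sub>R m))
       = ((g t)\<^sup>2 / (s2 T - s2 t)) *\<^sub>R (xT - x)"
      by (simp add: fb hb gb power2_eq_square)
    with L show "((\<lambda>\<gamma>. unidb_drift (\<lambda>_. 0) (\<lambda>_. 0) g T xT m \<gamma> t x)
              \<longlongrightarrow> ((g t)\<^sup>2 / (s2 T - s2 t)) *\<^sub>R (xT - x)) at_top" by simp
  qed
  show "\<forall>m :: 'a. \<forall>t\<in>{0<..<T}. \<forall>x :: 'a.
        ((\<lambda>\<gamma>. unidb_drift (\<lambda>z. - (1/2) * (g z)\<^sup>2) (\<lambda>_. 0) g T xT m \<gamma> t x)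
           \<longlongrightarrow> (- (1/2) * (g t)\<^sup>2) *\<^sub>R x
               + ((g t)\<^sup>2 / (vp_sigma2 g t * (vp_snr g t / vp_snr g T - 1))) *\<^sub>R
                   ((vp_alpha g t / vp_alpha g T) *\<^sub>R xT - x)) at_top"
  proof (intro allI ballI)
    fix m x :: 'a and t
    assume t: "t \<in> {0<..<T}"
    define f where "f = (\<lambda>z::real. - (1/2) * (g z)\<^sup>2)"
    define G where "G = (\<lambda>u. integral {0..u} (\<lambda>z. (g z)\<^sup>2))"
    have Gd: "(G has_real_derivative (g z)\<^sup>2) (at z within {a..b})"
      if "0 \<le> a" "b \<le> T" "z \<in> {a..b}" for a b z
      unfolding G_def using prim_deriv[OF gc2 that] .
    have fb: "fbar f a b = -(1/2) * (G b - G a)" if "0 \<le> a" "a \<le> b" "b \<le> T" for a b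
    proof -
      have "integral {a..b} (\<lambda>z. - (1/2) * (g z)\<^sup>2) = -(1/2) * G b - (-(1/2) * G a)"
      proof (rule ftc_real[where F = "\<lambda>u. -(1/2) * G u"])
        fix z assume "z \<in> {a..b}"
        then have "(G has_real_derivative (g z)\<^sup>2) (at z within {a..b})" using that by (intro Gd) auto
        from DERIV_cmult[OF this, of "-(1/2)"]
        show "((\<lambda>u. -(1/2) * G u) has_real_derivative - (1/2) * (g z)\<^sup>2) (at z within {a..b})" .
      qed (use that in auto)
      then show ?thesis unfolding fbar_def f_def by (simp add: algebra_simps)
    qed
    have G0: "G 0 = 0" by (simp add: G_def)
    have Gt: "G t > 0" unfolding G_def
      using t gp2[of 0 t] by (intro int_pos continuous_on_subset[OF gc2]) auto
    have "G T - G t = integral {t..T} (\<lambda>z. (g z)\<^sup>2)"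
      by (rule ftc_real[symmetric]) (use t in \<open>auto intro!: Gd\<close>)
    moreover have "integral {t..T} (\<lambda>z. (g z)\<^sup>2) > 0"
      using t gp2[of t T] by (intro int_pos continuous_on_subset[OF gc2]) auto
    ultimately have GTt: "G T > G t" by simp
    have "gbar2 f g t T = integral {t..T} (\<lambda>z. exp (G z) * (g z)\<^sup>2)"
      unfolding gbar2_def
      by (rule integral_cong) (use t in \<open>simp add: fb G0\<close>)
    also have "\<dots> = exp (G T) - exp (G t)"
    proof (rule ftc_real)
      fix z assume "z \<in> {t..T}"
      then have "(G has_real_derivative (g z)\<^sup>2) (at z within {t..T})" using t by (intro Gd) auto
      then show "((\<lambda>u. exp (G u)) has_real_derivative exp (G z) * (g z)\<^sup>2) (at z within {t..T})"
        by (auto intro!: derivative_eq_intros)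
    qed (use t in auto)
    finally have gb: "gbar2 f g t T = exp (G T) - exp (G t)" .
    define p where "p = vp_alpha g t"
    define q where "q = vp_alpha g T"
    have p_eq: "p = exp (-(1/2) * G t)" by (simp add: p_def vp_alpha_def G_def)
    have q_eq: "q = exp (-(1/2) * G T)" by (simp add: q_def vp_alpha_def G_def)
    have qpos: "q > 0" using q_eq by simp
    have qp: "q < p" using p_eq q_eq GTt by simp
    have p1: "p < 1" using p_eq Gt by simp
    have pp: "p > 0" using qpos qp by simp
    have qq: "q\<^sup>2 < p\<^sup>2" using qpos qp by (simp add: power_strict_mono)
    have n1: "p^2 - q^2 \<noteq> 0" using qq by simp
    have p2: "p^2 < 1" using pp p1 by (simp add: power_less_one_iff)
    have q2: "q^2 < 1" using qq p2 by simp
    have q0: "q^2 \<noteq> 0" using qpos by simp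
    have e1: "exp (fbar f t T) = q / p"
    proof -
      have "fbar f t T = -(1/2) * G T - (-(1/2) * G t)" 
      proof -
        have "fbar f t T = -(1/2) * (G T - G t)" using t by (intro fb) auto
        then show ?thesis by (simp add: right_diff_distrib)
      qed
      then show ?thesis by (simp only: p_eq q_eq exp_diff)
    qed
    have e2: "exp (2 * fbar f 0 T) = q\<^sup>2"
      using t by (simp add: fb G0 q_eq exp_double[symmetric])
    have e3: "exp (G T) = 1 / q\<^sup>2"
      by (simp add: q_eq exp_double[symmetric] exp_minus field_simps)
    have e4: "exp (G t) = 1 / p\<^sup>2"
      by (simp add: p_eq exp_double[symmetric] exp_minus field_simps)
    have hb: "hbar f (\<lambda>_. 0) a b = 0" for a b by (simp add: hbar_def)
    have s_t: "vp_sigma2 g t = 1 - p\<^sup>2" by (simp add: vp_sigma2_def p_def)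
    have snr_t: "vp_snr g t = p\<^sup>2 / (1 - p\<^sup>2)" by (simp add: vp_snr_def vp_sigma2_def p_def)
    have snr_T: "vp_snr g T = q\<^sup>2 / (1 - q\<^sup>2)" by (simp add: vp_snr_def vp_sigma2_def q_def)
    have a0: "q\<^sup>2 * (1 / q\<^sup>2 - 1 / p\<^sup>2) = (p^2 - q^2) / p^2" using pp qpos by (simp add: field_simps)
    have den: "exp (2 * fbar f 0 T) * gbar2 f g t T \<noteq> 0"
    proof -
      have "exp (2 * fbar f 0 T) * gbar2 f g t T = q\<^sup>2 * (1 / q\<^sup>2 - 1 / p\<^sup>2)" by (simp only: e2 gb e3 e4)
      then show ?thesis unfolding a0 using n1 pp by simp
    qed
    have L: "((\<lambda>\<gamma>. unidb_drift f (\<lambda>_. 0) g T xT m \<gamma> t x) \<longlongrightarrow>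
       f t *\<^sub>R x + (0::real) *\<^sub>R m + g t *\<^sub>R (((g t * exp (fbar f t T)) / (exp (2 * fbar f 0 T) * gbar2 f g t T)) *\<^sub>R
       (xT - exp (fbar f t T) *\<^sub>R x - (exp (fbar f 0 T) * hbar f (\<lambda>_. 0) t T) *\<^sub>R m))) at_top"
      using unidb_lim[OF den, of "\<lambda>_. 0" xT m x] by simp
    define C where "C = g t * (g t * (q / p) / (q\<^sup>2 * (1 / q\<^sup>2 - 1 / p\<^sup>2)))"
    define K where "K = (g t)\<^sup>2 / ((1 - p\<^sup>2) * ((p\<^sup>2 / (1 - p\<^sup>2)) / (q\<^sup>2 / (1 - q\<^sup>2)) - 1))"
    have Ce: "C = (g t)^2 * p * q / (p^2 - q^2)"
    proof -
      show ?thesis unfolding C_def a0 using pp qpos n1 by (simp add: field_simps power2_eq_square)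
    qed
    have Ke: "K = (g t)^2 * q^2 / (p^2 - q^2)"
    proof -
      have a: "(1 - p\<^sup>2) * ((p\<^sup>2 / (1 - p\<^sup>2)) / (q\<^sup>2 / (1 - q\<^sup>2)) - 1) = (p^2 - q^2) / q^2"
        using p2 q2 q0 by (simp add: field_simps)
      show ?thesis unfolding K_def a using n1 q0 by (simp add: field_simps)
    qed
    have c1: "C = K * (p / q)" unfolding Ce Ke using pp qpos n1 by (simp add: field_simps power2_eq_square)
    have c2: "C * (q / p) = K" unfolding Ce Ke using pp qpos n1 by (simp add: field_simps power2_eq_square)
    have "f t *\<^sub>R x + (0::real) *\<^sub>R m + g t *\<^sub>R (((g t * exp (fbar f t T)) / (exp (2 * fbar f 0 T) * gbar2 f g t T)) *\<^sub>R
       (xT - exp (fbar f t T) *\<^sub>R x - (exp (fbar f 0 T) * hbar f (\<lambda>_. 0) t T) *\<^sub>R m))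
       = f t *\<^sub>R x + g t *\<^sub>R ((g t * (q / p) / (q\<^sup>2 * (1 / q\<^sup>2 - 1 / p\<^sup>2))) *\<^sub>R (xT - (q / p) *\<^sub>R x))"
      by (simp only: e1 e2 e3 e4 gb hb) simp
    also have "\<dots> = f t *\<^sub>R x + C *\<^sub>R xT - (C * (q / p)) *\<^sub>R x"
      unfolding C_def by (simp add: scaleR_diff_right)
    also have "\<dots> = (- (1/2) * (g t)\<^sup>2) *\<^sub>R x + K *\<^sub>R ((p / q) *\<^sub>R xT - x)"
      using pp qpos by (simp add: c1 f_def scaleR_diff_right)
    finally have eq: "f t *\<^sub>R x + (0::real) *\<^sub>R m + g t *\<^sub>R (((g t * exp (fbar f t T)) / (exp (2 * fbar f 0 T) * gbar2 f g t T)) *\<^sub>R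
       (xT - exp (fbar f t T) *\<^sub>R x - (exp (fbar f 0 T) * hbar f (\<lambda>_. 0) t T) *\<^sub>R m))
       = (- (1/2) * (g t)\<^sup>2) *\<^sub>R x + K *\<^sub>R ((p / q) *\<^sub>R xT - x)" .
    show "((\<lambda>\<gamma>. unidb_drift (\<lambda>z. - (1/2) * (g z)\<^sup>2) (\<lambda>_. 0) g T xT m \<gamma> t x)
           \<longlongrightarrow> (- (1/2) * (g t)\<^sup>2) *\<^sub>R x
               + ((g t)\<^sup>2 / (vp_sigma2 g t * (vp_snr g t / vp_snr g T - 1))) *\<^sub>R
                   ((vp_alpha g t / vp_alpha g T) *\<^sub>R xT - x)) at_top"
    proof -
      have L2: "((\<lambda>\<gamma>. unidb_drift f (\<lambda>_. 0) g T xT m \<gamma> t x) \<longlongrightarrow> (- (1/2) * (g t)\<^sup>2) *\<^sub>R x + K *\<^sub>R ((p / q) *\<^sub>R xT - x)) at_top"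
        using L unfolding eq .
      have ge: "(g t)\<^sup>2 / (vp_sigma2 g t * (vp_snr g t / vp_snr g T - 1)) = K"
        by (simp only: K_def s_t snr_t snr_T)
      show ?thesis unfolding ge p_def[symmetric] q_def[symmetric] using L2 unfolding f_def .
    qed
  qed
  show "\<forall>(\<theta> :: real \<Rightarrow> real) (lam :: real).
        continuous_on {0..T} \<theta> \<and> (\<forall>t\<in>{0..T}. \<theta> t > 0) \<and> lam > 0 \<and>
        (\<forall>t\<in>{0..T}. (g t)\<^sup>2 = 2 * lam\<^sup>2 * \<theta> t) \<longrightarrow>
        (\<forall>t\<in>{0..<T}. \<forall>x :: 'a.
           ((\<lambda>\<gamma>. unidb_drift (\<lambda>z. - \<theta> z) \<theta> g T xT xT \<gamma> t x)
              \<longlongrightarrow> (\<theta> t + (g t)\<^sup>2 * exp (- 2 * thetabar \<theta> t T) / goub_sigmabar2 lam \<theta> t T)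
                    *\<^sub>R (xT - x)) at_top)"
  proof (intro allI impI ballI)
    fix \<theta> :: "real \<Rightarrow> real" and lam :: real and t and x :: 'a
    assume H: "continuous_on {0..T} \<theta> \<and> (\<forall>t\<in>{0..T}. \<theta> t > 0) \<and> lam > 0 \<and>
        (\<forall>t\<in>{0..T}. (g t)\<^sup>2 = 2 * lam\<^sup>2 * \<theta> t)"
    assume t: "t \<in> {0..<T}"
    have thc: "continuous_on {0..T} \<theta>" and thp: "\<forall>t\<in>{0..T}. \<theta> t > 0" and lp: "lam > 0"
      and gth: "\<forall>t\<in>{0..T}. (g t)\<^sup>2 = 2 * lam\<^sup>2 * \<theta> t" using H by auto
    define f where "f = (\<lambda>z::real. - \<theta> z)"
    define G where "G = (\<lambda>u. integral {0..u} \<theta>)"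
    have Gd: "(G has_real_derivative \<theta> z) (at z within {a..b})"
      if "0 \<le> a" "b \<le> T" "z \<in> {a..b}" for a b z
      unfolding G_def using prim_deriv[OF thc that] .
    have Gi: "integral {a..b} \<theta> = G b - G a" if "0 \<le> a" "a \<le> b" "b \<le> T" for a b
      by (rule ftc_real) (use that in \<open>auto intro!: Gd\<close>)
    have fb: "fbar f a b = G a - G b" if "0 \<le> a" "a \<le> b" "b \<le> T" for a b
      unfolding fbar_def f_def using Gi[OF that] by simp
    have G0: "G 0 = 0" by (simp add: G_def)
    have "integral {t..T} \<theta> > 0"
      using t thp by (intro int_pos continuous_on_subset[OF thc]) auto
    then have GTt: "G T > G t" using Gi[of t T] t by simp
    define p where "p = exp (G t)"
    define q where "q = exp (G T)"
    have pp: "p > 0" and qpos: "q > 0" by (simp_all add: p_def q_def)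
    have pq: "p < q" using GTt by (simp add: p_def q_def)
    have hb0: "hbar f \<theta> t T = integral {t..T} (\<lambda>z. exp (G z) * \<theta> z)"
      unfolding hbar_def
      by (rule integral_cong) (use t in \<open>simp add: fb G0\<close>)
    also have "\<dots> = exp (G T) - exp (G t)"
    proof (rule ftc_real)
      fix z assume "z \<in> {t..T}"
      then have "(G has_real_derivative \<theta> z) (at z within {t..T})" using t by (intro Gd) auto
      then show "((\<lambda>u. exp (G u)) has_real_derivative exp (G z) * \<theta> z) (at z within {t..T})"
        by (auto intro!: derivative_eq_intros)
    qed (use t in auto)
    finally have hb: "hbar f \<theta> t T = q - p" by (simp add: p_def q_def)
    have "gbar2 f g t T = integral {t..T} (\<lambda>z. lam\<^sup>2 * (exp (2 * G z) * (2 * \<theta> z)))"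
      unfolding gbar2_def
    proof (rule integral_cong)
      fix z assume z: "z \<in> {t..T}"
      then have "(g z)\<^sup>2 = 2 * lam\<^sup>2 * \<theta> z" using gth t by auto
      then show "exp (- 2 * fbar f 0 z) * (g z)\<^sup>2 = lam\<^sup>2 * (exp (2 * G z) * (2 * \<theta> z))"
        using z t by (simp add: fb G0)
    qed
    also have "\<dots> = lam\<^sup>2 * exp (2 * G T) - lam\<^sup>2 * exp (2 * G t)"
    proof (rule ftc_real)
      fix z assume "z \<in> {t..T}"
      then have "(G has_real_derivative \<theta> z) (at z within {t..T})" using t by (intro Gd) auto
      then show "((\<lambda>u. lam\<^sup>2 * exp (2 * G u)) has_real_derivative lam\<^sup>2 * (exp (2 * G z) * (2 * \<theta> z))) (at z within {t..T})"
        by (auto intro!: derivative_eq_intros)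
    qed (use t in auto)
    finally have gb: "gbar2 f g t T = lam\<^sup>2 * (q\<^sup>2 - p\<^sup>2)"
      by (simp add: p_def q_def exp_double right_diff_distrib)
    have e1: "exp (fbar f t T) = p / q"
      using t by (simp add: fb p_def q_def exp_diff)
    have e0: "exp (fbar f 0 T) = 1 / q"
      using t by (simp add: fb G0 q_def exp_minus divide_inverse)
    have e2: "exp (2 * fbar f 0 T) = 1 / q\<^sup>2"
      using t by (simp add: fb G0 q_def exp_double[symmetric] exp_minus divide_inverse power_inverse)
    have tb: "thetabar \<theta> t T = G T - G t" unfolding thetabar_def using t by (intro Gi) auto
    have e3: "exp (- 2 * thetabar \<theta> t T) = p\<^sup>2 / q\<^sup>2"
    proof -
      have "exp (- 2 * thetabar \<theta> t T) = exp (2 * G t) / exp (2 * G T)"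
        by (simp add: tb exp_diff[symmetric] algebra_simps)
      then show ?thesis by (simp add: exp_double p_def q_def)
    qed
    have qq: "p\<^sup>2 < q\<^sup>2" using pp pq by (simp add: power_strict_mono)
    have n1: "q^2 - p^2 \<noteq> 0" using qq by simp
    have l2: "lam\<^sup>2 \<noteq> 0" using lp by simp
    have den: "exp (2 * fbar f 0 T) * gbar2 f g t T \<noteq> 0"
      unfolding e2 gb using n1 l2 qpos by simp
    have L: "((\<lambda>\<gamma>. unidb_drift f \<theta> g T xT xT \<gamma> t x) \<longlongrightarrow>
       f t *\<^sub>R x + \<theta> t *\<^sub>R xT + g t *\<^sub>R (((g t * exp (fbar f t T)) / (exp (2 * fbar f 0 T) * gbar2 f g t T)) *\<^sub>R
       (xT - exp (fbar f t T) *\<^sub>R x - (exp (fbar f 0 T) * hbar f \<theta> t T) *\<^sub>R xT))) at_top"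
      using unidb_lim[OF den, of \<theta> xT xT x] .
    define C where "C = g t * (g t * (p / q) / (1 / q\<^sup>2 * (lam\<^sup>2 * (q\<^sup>2 - p\<^sup>2))))"
    have Ce: "C * (p / q) = (g t)\<^sup>2 * (p\<^sup>2 / q\<^sup>2) / goub_sigmabar2 lam \<theta> t T"
    proof -
      have s: "goub_sigmabar2 lam \<theta> t T = lam\<^sup>2 * (q\<^sup>2 - p\<^sup>2) / q\<^sup>2"
        unfolding goub_sigmabar2_def
        by (simp only: e3[unfolded mult_minus_left] mult_minus_left) (use qpos in \<open>simp add: field_simps\<close>)
      show ?thesis unfolding s C_def using qpos n1 l2 by (simp add: field_simps power2_eq_square)
    qed
    have v: "xT - (p / q) *\<^sub>R x - (1 / q * (q - p)) *\<^sub>R xT = (p / q) *\<^sub>R (xT - x)"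
    proof -
      have "1 / q * (q - p) = 1 - p / q" using qpos by (simp add: field_simps)
      then have "(1 / q * (q - p)) *\<^sub>R xT = xT - (p / q) *\<^sub>R xT" by (simp only: scaleR_diff_left scaleR_one)
      then show ?thesis by (simp add: scaleR_diff_right)
    qed
    have "f t *\<^sub>R x + \<theta> t *\<^sub>R xT + g t *\<^sub>R (((g t * exp (fbar f t T)) / (exp (2 * fbar f 0 T) * gbar2 f g t T)) *\<^sub>R
       (xT - exp (fbar f t T) *\<^sub>R x - (exp (fbar f 0 T) * hbar f \<theta> t T) *\<^sub>R xT))
       = f t *\<^sub>R x + \<theta> t *\<^sub>R xT + g t *\<^sub>R ((g t * (p / q) / (1 / q\<^sup>2 * (lam\<^sup>2 * (q\<^sup>2 - p\<^sup>2)))) *\<^sub>R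
       (xT - (p / q) *\<^sub>R x - (1 / q * (q - p)) *\<^sub>R xT))"
      by (simp only: e1 e0 e2 gb hb)
    also have "\<dots> = \<theta> t *\<^sub>R (xT - x) + (C * (p / q)) *\<^sub>R (xT - x)"
      unfolding v C_def f_def by (simp add: algebra_simps)
    also have "\<dots> = (\<theta> t + (g t)\<^sup>2 * exp (- 2 * thetabar \<theta> t T) / goub_sigmabar2 lam \<theta> t T) *\<^sub>R (xT - x)"
      unfolding Ce e3 by (simp add: scaleR_add_left)
    finally have eq: "f t *\<^sub>R x + \<theta> t *\<^sub>R xT + g t *\<^sub>R (((g t * exp (fbar f t T)) / (exp (2 * fbar f 0 T) * gbar2 f g t T)) *\<^sub>R
       (xT - exp (fbar f t T) *\<^sub>R x - (exp (fbar f 0 T) * hbar f \<theta> t T) *\<^sub>R xT))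
       = (\<theta> t + (g t)\<^sup>2 * exp (- 2 * thetabar \<theta> t T) / goub_sigmabar2 lam \<theta> t T) *\<^sub>R (xT - x)" .
    show "((\<lambda>\<gamma>. unidb_drift (\<lambda>z. - \<theta> z) \<theta> g T xT xT \<gamma> t x)
              \<longlongrightarrow> (\<theta> t + (g t)\<^sup>2 * exp (- 2 * thetabar \<theta> t T) / goub_sigmabar2 lam \<theta> t T)
                    *\<^sub>R (xT - x)) at_top"
      using L unfolding eq unfolding f_def .
  qed
qed

end
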